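(* Let $P$ be a finite $(3+1)$-free poset, $\lambda$ a partition, and $(r,c)$, $(r+d+1,c+d)$ boxes of the Young diagram of $\lambda$ with $d\ge0$. Then for every $P$-tableau $T$ of shape $\lambda$, $T(r,c)<_PT(r+d+1,c+d)$.
   Context: $a<_Pb$: strict order. Young diagrams in English notation (row index increasing downward, column index increasing rightward). A $P$-tableau of shape $\lambda$ is a filling $T$ of the Young diagram by elements of $P$ with $T(1,c)<_PT(2,c)<_P\cdots$ down each column and $T(r,c+1)\not<_PT(r,c)$ along each row. *)

theory Defs
  imports Main
begin

definition strict_poset :: "'a set \<Rightarrow> ('a \<Rightarrow> 'a \<Rightarrow> bool) \<Rightarrow> bool" where
  "strict_poset P lt \<longleftrightarrow>
     (\<forall>x\<in>P. \<not> lt x x) \<and>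
     (\<forall>x\<in>P. \<forall>y\<in>P. \<forall>z\<in>P. lt x y \<longrightarrow> lt y z \<longrightarrow> lt x z)"

definition incomparable :: "('a \<Rightarrow> 'a \<Rightarrow> bool) \<Rightarrow> 'a \<Rightarrow> 'a \<Rightarrow> bool" where
  "incomparable lt x y \<longleftrightarrow> x \<noteq> y \<and> \<not> lt x y \<and> \<not> lt y x"

definition three_one_free :: "'a set \<Rightarrow> ('a \<Rightarrow> 'a \<Rightarrow> bool) \<Rightarrow> bool" where
  "three_one_free P lt \<longleftrightarrow>
     \<not> (\<exists>a\<in>P. \<exists>b\<in>P. \<exists>c\<in>P. \<exists>d\<in>P. lt a b \<and> lt b c \<and>
          incomparable lt d a \<and> incomparable lt d b \<and> incomparable lt d c)"

definition is_partition :: "nat list \<Rightarrow> bool" where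
  "is_partition la \<longleftrightarrow> sorted_wrt (\<ge>) la \<and> (\<forall>x\<in>set la. 0 < x)"

text \<open>Boxes of the Young diagram, English notation, 1-indexed: (row, column).\<close>
definition in_diagram :: "nat list \<Rightarrow> nat \<times> nat \<Rightarrow> bool" where
  "in_diagram la rc \<longleftrightarrow> (case rc of (r, c) \<Rightarrow>
     1 \<le> r \<and> r \<le> length la \<and> 1 \<le> c \<and> c \<le> la ! (r - 1))"

definition P_tableau :: "'a set \<Rightarrow> ('a \<Rightarrow> 'a \<Rightarrow> bool) \<Rightarrow> nat list \<Rightarrow> (nat \<Rightarrow> nat \<Rightarrow> 'a) \<Rightarrow> bool" where
  "P_tableau P lt la T \<longleftrightarrow>
     (\<forall>r c. in_diagram la (r, c) \<longrightarrow> T r c \<in> P) \<and>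
     (\<forall>r c. in_diagram la (r, c) \<and> in_diagram la (r + 1, c) \<longrightarrow> lt (T r c) (T (r + 1) c)) \<and>
     (\<forall>r c. in_diagram la (r, c) \<and> in_diagram la (r, c + 1) \<longrightarrow> \<not> lt (T r (c + 1)) (T r c))"

end

theory Submission
  imports Defs
begin

lemma diag_mono:
  assumes "is_partition la" "in_diagram la (i, j)" "1 \<le> i'" "i' \<le> i" "1 \<le> j'" "j' \<le> j"
  shows "in_diagram la (i', j')"
proof -
  have s: "sorted_wrt (\<ge>) la" using assms(1) by (simp add: is_partition_def)
  have len: "i \<le> length la" "j \<le> la ! (i - 1)" using assms(2) by (auto simp: in_diagram_def)
  have "la ! (i - 1) \<le> la ! (i' - 1)"
  proof (cases "i' = i")
    case False
    then have "i' - 1 < i - 1" using assms by linarith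
    then show ?thesis using s len by (simp add: sorted_wrt_iff_nth_less)
  qed simp
  then show ?thesis using assms len by (auto simp: in_diagram_def)
qed

lemma main_ind:
  assumes po: "strict_poset P lt" and f: "three_one_free P lt"
    and pa: "is_partition la" and T: "P_tableau P lt la T"
  shows "in_diagram la (r, c) \<Longrightarrow> in_diagram la (r + d + 1, c + d) \<Longrightarrow> lt (T r c) (T (r + d + 1) (c + d))"
proof (induction d arbitrary: r c)
  case 0
  then show ?case using T by (simp add: P_tableau_def)
next
  case (Suc d)
  have r1: "1 \<le> r" "1 \<le> c" using Suc.prems(1) by (auto simp: in_diagram_def)
  have du: "in_diagram la (r + d + 1, c + d)"
    by (rule diag_mono[OF pa Suc.prems(2)]) (use r1 in auto)
  have dv: "in_diagram la (r + Suc d + 1, c + d)"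
    by (rule diag_mono[OF pa Suc.prems(2)]) (use r1 in auto)
  define x where "x = T r c"
  define u where "u = T (r + d + 1) (c + d)"
  define v where "v = T (r + Suc d + 1) (c + d)"
  define z where "z = T (r + Suc d + 1) (c + Suc d)"
  have xu: "lt x u" using Suc.IH[OF Suc.prems(1) du] by (simp add: x_def u_def)
  have col: "\<And>i j. in_diagram la (i, j) \<Longrightarrow> in_diagram la (i + 1, j) \<Longrightarrow> lt (T i j) (T (i + 1) j)"
    using T unfolding P_tableau_def by blast
  have row: "\<And>i j. in_diagram la (i, j) \<Longrightarrow> in_diagram la (i, j + 1) \<Longrightarrow> \<not> lt (T i (j + 1)) (T i j)"
    using T unfolding P_tableau_def by blast
  have inT: "\<And>i j. in_diagram la (i, j) \<Longrightarrow> T i j \<in> P"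
    using T unfolding P_tableau_def by blast
  have uv: "lt u v" using col[OF du] dv unfolding u_def v_def by simp
  have nzv: "\<not> lt z v" using row[OF dv] Suc.prems(2) unfolding z_def v_def by simp
  have inP: "x \<in> P" "u \<in> P" "v \<in> P" "z \<in> P" using inT Suc.prems du dv
    unfolding x_def u_def v_def z_def by auto
  have tr: "\<And>a b e. a \<in> P \<Longrightarrow> b \<in> P \<Longrightarrow> e \<in> P \<Longrightarrow> lt a b \<Longrightarrow> lt b e \<Longrightarrow> lt a e"
    using po unfolding strict_poset_def by blast
  show ?case
  proof (rule ccontr)
    assume nxz: "\<not> lt (T r c) (T (r + Suc d + 1) (c + Suc d))"
    hence nxz: "\<not> lt x z" by (simp add: x_def z_def)
    have xv: "lt x v" using tr inP xu uv by blast
    have i1: "incomparable lt z x" unfolding incomparable_def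
      using nxz xv nzv tr inP by blast
    have i2: "incomparable lt z u" unfolding incomparable_def
      using nxz xu uv nzv tr inP by blast
    have i3: "incomparable lt z v" unfolding incomparable_def
      using nxz xv nzv tr inP by blast
    show False using f inP xu uv i1 i2 i3 unfolding three_one_free_def by blast
  qed
qed

theorem mainTheorem20:
  fixes P :: "'a set" and lt :: "'a \<Rightarrow> 'a \<Rightarrow> bool"
    and la :: "nat list" and T :: "nat \<Rightarrow> nat \<Rightarrow> 'a" and r c d :: nat
  assumes "finite P" and "strict_poset P lt" and "three_one_free P lt"
    and "is_partition la"
    and "in_diagram la (r, c)" and "in_diagram la (r + d + 1, c + d)"
    and "P_tableau P lt la T"
  shows "lt (T r c) (T (r + d + 1) (c + d))"
  using main_ind[OF assms(2,3,4,7) assms(5,6)] .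

end
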